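(* Let $t(n)=\operatorname{num}_{\mathcal T}(n,1)$ for $n\ge1$ and $t(0)=1$. Then $t(3n)=t(3n+1)=t(3n+2)$ for all $n\ge0$, and $t(3n)-t(3n-2)=2^{2n}t(n)$ for all $n\ge1$.
   Context: A ternary partition of $n$ is a partition of $n$ (finite nonincreasing sequence of positive integers summing to $n$) all of whose parts are powers of $3$ (including $1$); $\mathcal T(n)$ is the set of ternary partitions of $n$, and $m_\lambda(i)$ the number of parts of $\lambda$ equal to $i$. For $\lambda\in\mathcal T(n)$ let $h_{\mathcal T,\lambda}(x)=\prod_{k\ge0}(1+x^{3^k})^{\lfloor n/3^k\rfloor-m_\lambda(3^k)}$. Let $G_{\mathcal T}(n,x)=\gcd\{h_{\mathcal T,\lambda}(x):\lambda\in\mathcal T(n)\}$ in $\mathbb{Z}[x]$ (normalized with positive leading coefficient), and $\operatorname{num}_{\mathcal T}(n,x)=\frac{1}{G_{\mathcal T}(n,x)}\sum_{\lambda\in\mathcal T(n)}h_{\mathcal T,\lambda}(x)\in\mathbb{Z}[x]$. *)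

theory Defs
  imports "HOL-Computational_Algebra.Computational_Algebra" "HOL-Library.Multiset"
begin

definition ternary_partitions :: "nat \<Rightarrow> nat multiset set" where
  "ternary_partitions n = {M. (\<forall>x\<in>#M. \<exists>k. x = 3 ^ k) \<and> sum_mset M = n}"

text \<open>h_{T,lambda}(x) = prod_{k>=0} (1 + x^(3^k))^(floor(n/3^k) - m_lambda(3^k)).
  For k > n we have 3^k > n, so floor(n/3^k) = 0 = m_lambda(3^k) and the factor is 1;
  hence the product may be taken over k in {0..n}.\<close>
definition h_T :: "nat \<Rightarrow> nat multiset \<Rightarrow> int poly" where
  "h_T n M = (\<Prod>k\<in>{0..n}. ([:1:] + monom 1 (3 ^ k)) ^ (n div 3 ^ k - count M (3 ^ k)))"

definition G_T :: "nat \<Rightarrow> int poly" where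
  "G_T n = Gcd (h_T n ` ternary_partitions n)"

definition num_T :: "nat \<Rightarrow> int poly" where
  "num_T n = (\<Sum>M\<in>ternary_partitions n. h_T n M) div G_T n"

definition t_seq :: "nat \<Rightarrow> int" where
  "t_seq n = (if n = 0 then 1 else poly (num_T n) 1)"

end

theory Submission
  imports Defs
begin

lemma pow3_ge1: "x = 3^k \<Longrightarrow> (1::nat) \<le> x" by simp

lemma size_le_sum: "(\<forall>x\<in>#M. \<exists>k. x = (3::nat)^k) \<Longrightarrow> size M \<le> sum_mset M"
proof (induction M)
  case empty then show ?case by simp
next
  case (add x M)
  then obtain k where "x = 3^k" by auto
  then have "1 \<le> x" by simp
  with add show ?case by auto
qed

lemma T_size_le: "M \<in> ternary_partitions m \<Longrightarrow> size M \<le> m"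
  unfolding ternary_partitions_def using size_le_sum by blast

lemma mem_le_sum: "x \<in># M \<Longrightarrow> (x::nat) \<le> sum_mset M"
  by (metis le_add1 sum_mset.remove)

lemma T_elem_le: "M \<in> ternary_partitions m \<Longrightarrow> x \<in># M \<Longrightarrow> x \<le> m"
  using mem_le_sum[of x M] unfolding ternary_partitions_def by auto

lemma finite_T: "finite (ternary_partitions m)"
proof -
  have "ternary_partitions m \<subseteq> (\<Union>s\<in>{..m}. multisets_of_size {..m} s)"
    unfolding multisets_of_size_def using T_size_le T_elem_le by fastforce
  moreover have "finite (\<Union>s\<in>{..m}. multisets_of_size {..m} s)" by auto
  ultimately show ?thesis using finite_subset by blast
qed

lemma count1_mod: "(\<forall>x\<in>#M. \<exists>k. x = (3::nat)^k) \<Longrightarrow> count M 1 mod 3 = sum_mset M mod 3"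
proof (induction M)
  case empty then show ?case by simp
next
  case (add x M)
  then obtain k where k: "x = 3^k" by auto
  from add have IH: "count M 1 mod 3 = sum_mset M mod 3" by auto
  show ?case
  proof (cases k)
    case 0
    then show ?thesis using k IH by (simp add: mod_Suc)
  next
    case (Suc j)
    then have "x mod 3 = 0" "x \<noteq> 1" using k by auto
    then show ?thesis using IH by (simp add: mod_add_eq[symmetric])
  qed
qed

lemma T_count1_mod: "M \<in> ternary_partitions m \<Longrightarrow> count M 1 mod 3 = m mod 3"
  unfolding ternary_partitions_def using count1_mod by auto

lemma bij_ones: "bij_betw (\<lambda>M. M + replicate_mset r 1) (ternary_partitions m)
   {N\<in>ternary_partitions (m+r). r \<le> count N 1}"
proof (rule bij_betw_byWitness[where f' = "\<lambda>N. N - replicate_mset r 1"])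
  show "\<forall>a\<in>ternary_partitions m. a + replicate_mset r 1 - replicate_mset r 1 = a" by simp
  show "\<forall>a'\<in>{N \<in> ternary_partitions (m + r). r \<le> count N 1}.
       a' - replicate_mset r 1 + replicate_mset r 1 = a'"
  proof
    fix N assume "N \<in> {N \<in> ternary_partitions (m + r). r \<le> count N 1}"
    then have "replicate_mset r 1 \<subseteq># N" by (simp add: count_le_replicate_mset_subset_eq)
    then show "N - replicate_mset r 1 + replicate_mset r 1 = N" by simp
  qed
  show "(\<lambda>M. M + replicate_mset r 1) ` ternary_partitions m
    \<subseteq> {N \<in> ternary_partitions (m + r). r \<le> count N 1}"
  proof clarify
    fix M assume M: "M \<in> ternary_partitions m"
    have r1: "\<forall>x\<in>#replicate_mset r 1. \<exists>k. x = (3::nat)^k"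
    proof
      fix x assume "x \<in># replicate_mset r (1::nat)"
      then have "x = 3^0" by (simp split: if_splits)
      then show "\<exists>k. x = (3::nat)^k" by blast
    qed
    have s: "sum_mset (M + replicate_mset r 1) = sum_mset M + r" by simp
    have ce: "count (M + replicate_mset r 1) 1 = count M 1 + r"
      by (subst count_union, subst count_replicate_mset, simp only: if_P[OF refl])
    have c: "count (M + replicate_mset r 1) 1 \<ge> r" unfolding ce by (rule le_add2)
    have pM: "\<forall>x\<in>#M. \<exists>k. x = (3::nat)^k" using M unfolding ternary_partitions_def by blast
    have "\<forall>x\<in>#M + replicate_mset r 1. \<exists>k. x = (3::nat)^k"
    proof
      fix x assume "x \<in># M + replicate_mset r 1"
      then have "x \<in># M \<or> x \<in># replicate_mset r 1" by (simp only: union_iff)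
      then show "\<exists>k. x = (3::nat)^k" using pM r1 by blast
    qed
    then have "M + replicate_mset r 1 \<in> ternary_partitions (m + r)"
      using M s unfolding ternary_partitions_def by simp
    then show "M + replicate_mset r 1 \<in> ternary_partitions (m + r) \<and> r \<le> count (M + replicate_mset r 1) 1"
      using c by (rule conjI)
  qed
  show "(\<lambda>N. N - replicate_mset r 1) ` {N \<in> ternary_partitions (m + r). r \<le> count N 1}
    \<subseteq> ternary_partitions m"
  proof clarify
    fix N assume N: "N \<in> ternary_partitions (m + r)" "r \<le> count N 1"
    then have sub: "replicate_mset r 1 \<subseteq># N" by (simp add: count_le_replicate_mset_subset_eq)
    then have NN: "N = (N - replicate_mset r 1) + replicate_mset r 1" by simp
    have sr: "sum_mset (replicate_mset r (1::nat)) = r" by simp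
    have "sum_mset N = sum_mset (N - replicate_mset r 1) + sum_mset (replicate_mset r 1)"
      by (subst NN, simp only: sum_mset.union)
    then have "sum_mset N = sum_mset (N - replicate_mset r 1) + r" unfolding sr .
    then have s: "sum_mset (N - replicate_mset r 1) = m" using N(1) unfolding ternary_partitions_def by simp
    have p: "\<forall>x\<in>#N - replicate_mset r 1. \<exists>k. x = (3::nat)^k"
      using N(1) unfolding ternary_partitions_def by (blast dest: in_diffD)
    show "N - replicate_mset r 1 \<in> ternary_partitions m"
      using s p unfolding ternary_partitions_def by blast
  qed
qed

lemma sum_times3: "sum_mset (image_mset ((*) (3::nat)) K) = 3 * sum_mset K"
  by (induction K) auto

lemma part_div3:
  assumes "N \<in> ternary_partitions m" "count N 1 = 0" "x \<in># N"
  shows "3 * (x div 3) = x \<and> (\<exists>k. x div 3 = 3^k)"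
proof -
  from assms obtain k where k: "x = 3^k" unfolding ternary_partitions_def by blast
  have "count N x > 0" using assms(3) by simp
  then have "x \<noteq> 1" using assms(2) by (metis less_irrefl)
  then have "k \<noteq> 0" using k by auto
  then obtain j where j: "k = Suc j" by (cases k) auto
  then have "x = 3 * 3^j" using k by simp
  then have d: "x div 3 = 3^j" by simp
  have "3 * (x div 3) = x" using d \<open>x = 3 * 3^j\<close> by simp
  then show ?thesis using d by blast
qed
lemma div3_back:
  assumes "\<forall>x\<in>#N. 3 * (x div 3) = (x::nat)"
  shows "image_mset ((*) 3) (image_mset (\<lambda>x. x div 3) N) = N"
proof -
  have e: "image_mset (\<lambda>x. 3 * (x div 3)) N = image_mset id N"
  proof (rule image_mset_cong)
    fix x assume "x \<in># N"
    then have "3 * (x div 3) = x" using assms by blast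
    then show "3 * (x div 3) = id x" by (simp only: id_def)
  qed
  have "image_mset ((*) 3) (image_mset (\<lambda>x. x div 3) N) = image_mset (\<lambda>x. 3 * (x div 3)) N"
    by (simp only: multiset.map_comp o_def)
  then show ?thesis using e by (simp only: image_mset_id)
qed

lemma bij_triple: "bij_betw (image_mset ((*) 3)) (ternary_partitions n)
   {N\<in>ternary_partitions (3*n). count N 1 = 0}"
proof (rule bij_betw_byWitness[where f' = "image_mset (\<lambda>x. x div 3)"])
  show "\<forall>a\<in>ternary_partitions n. image_mset (\<lambda>x. x div 3) (image_mset ((*) 3) a) = a"
  proof
    fix a :: "nat multiset"
    have "image_mset (\<lambda>x. x div 3) (image_mset ((*) 3) a) = image_mset (\<lambda>x. 3 * x div 3) a"
      by (simp only: multiset.map_comp o_def)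
    also have "\<dots> = image_mset id a" by (rule image_mset_cong) simp
    finally show "image_mset (\<lambda>x. x div 3) (image_mset ((*) 3) a) = a" by (simp only: image_mset_id)
  qed
  show "\<forall>a'\<in>{N \<in> ternary_partitions (3 * n). count N 1 = 0}.
       image_mset ((*) 3) (image_mset (\<lambda>x. x div 3) a') = a'"
  proof
    fix N assume N: "N \<in> {N \<in> ternary_partitions (3 * n). count N 1 = 0}"
    then have "\<forall>x\<in>#N. 3 * (x div 3) = x" using part_div3[of N "3*n"] by blast
    then show "image_mset ((*) 3) (image_mset (\<lambda>x. x div 3) N) = N" by (rule div3_back)
  qed
  show "image_mset ((*) 3) ` ternary_partitions n
    \<subseteq> {N \<in> ternary_partitions (3 * n). count N 1 = 0}"
  proof clarify
    fix M assume M: "M \<in> ternary_partitions n"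
    have s: "sum_mset (image_mset ((*) 3) M) = 3 * n"
      using M sum_times3[of M] unfolding ternary_partitions_def by simp
    have "1 \<notin># image_mset ((*) (3::nat)) M" by auto
    then have c: "count (image_mset ((*) (3::nat)) M) 1 = 0" by (simp add: count_eq_zero_iff)
    have p: "\<forall>x\<in>#image_mset ((*) 3) M. \<exists>k. x = (3::nat)^k"
    proof
      fix x assume "x \<in># image_mset ((*) 3) M"
      then obtain y where y: "y \<in># M" "x = 3 * y" by auto
      with M obtain k where "y = 3^k" unfolding ternary_partitions_def by blast
      with y have "x = 3^Suc k" by simp
      then show "\<exists>k. x = (3::nat)^k" by blast
    qed
    show "image_mset ((*) 3) M \<in> ternary_partitions (3 * n) \<and>
       count (image_mset ((*) 3) M) 1 = 0"
      using s c p unfolding ternary_partitions_def by simp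
  qed
  show "image_mset (\<lambda>x. x div 3) ` {N \<in> ternary_partitions (3 * n). count N 1 = 0}
    \<subseteq> ternary_partitions n"
  proof clarify
    fix N assume N: "N \<in> ternary_partitions (3 * n)" "count N 1 = 0"
    have eq: "\<forall>x\<in>#N. 3 * (x div 3) = x \<and> (\<exists>k. x div 3 = 3^k)"
      using part_div3[OF N] by blast
    then have img: "image_mset ((*) 3) (image_mset (\<lambda>x. x div 3) N) = N"
      by (intro div3_back) blast
    have sN: "sum_mset N = 3 * n" using N(1) unfolding ternary_partitions_def by simp
    have "sum_mset (image_mset ((*) 3) (image_mset (\<lambda>x. x div 3) N)) = sum_mset N"
      by (simp only: img)
    then have "3 * sum_mset (image_mset (\<lambda>x. x div 3) N) = 3 * n"
      using sum_times3[of "image_mset (\<lambda>x. x div 3) N"] sN by linarith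
    then have "sum_mset (image_mset (\<lambda>x. x div 3) N) = n" by linarith
    moreover have "\<forall>y\<in>#image_mset (\<lambda>x. x div 3) N. \<exists>k. y = (3::nat)^k"
    proof
      fix y assume "y \<in># image_mset (\<lambda>x. x div 3) N"
      then obtain x where "x \<in># N" "y = x div 3" by (auto simp only: in_image_mset)
      then show "\<exists>k. y = (3::nat)^k" using eq by blast
    qed
    ultimately show "image_mset (\<lambda>x. x div 3) N \<in> ternary_partitions n"
      unfolding ternary_partitions_def by simp
  qed
qed

definition f :: "nat \<Rightarrow> int" where
  "f n = (\<Sum>M\<in>ternary_partitions n. 2^(n - size M))"

lemma f_shift: assumes "r \<in> {1,2}" shows "f (3*n + r) = f (3*n)"
proof -
  have "ternary_partitions (3*n+r) = {N\<in>ternary_partitions (3*n+r). r \<le> count N 1}"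
  proof safe
    fix N assume "N \<in> ternary_partitions (3*n+r)"
    then have "count N 1 mod 3 = r" using T_count1_mod[of N] assms by auto
    then show "r \<le> count N 1" by (metis mod_less_eq_dividend)
  qed
  then have "f (3*n+r) = (\<Sum>N\<in>{N\<in>ternary_partitions (3*n+r). r \<le> count N 1}. 2^(3*n+r - size N))"
    unfolding f_def by simp
  also have "\<dots> = (\<Sum>M\<in>ternary_partitions (3*n). 2^(3*n+r - size (M + replicate_mset r 1)))"
    using sum.reindex_bij_betw[OF bij_ones[of r "3*n"], of "\<lambda>N. (2::int)^(3*n+r - size N)"] by simp
  also have "\<dots> = f (3*n)" unfolding f_def by simp
  finally show ?thesis .
qed

lemma f_rec: assumes "n \<ge> 1" shows "f (3*n) = f (3*(n-1)) + 2^(2*n) * f n"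
proof -
  let ?T = "ternary_partitions (3*n)"
  let ?A = "{N\<in>?T. 3 \<le> count N 1}"
  let ?B = "{N\<in>?T. count N 1 = 0}"
  have c: "3 \<le> count N 1 \<or> count N 1 = 0" if "N \<in> ?T" for N
  proof -
    have "count N 1 mod 3 = 0" using T_count1_mod[OF that] by simp
    then show ?thesis by presburger
  qed
  have split: "?T = ?A \<union> ?B" using c by blast
  have fin: "finite ?A" "finite ?B" using finite_T by auto
  have "f (3*n) = (\<Sum>N\<in>?A. 2^(3*n - size N)) + (\<Sum>N\<in>?B. 2^(3*n - size N))"
    unfolding f_def by (subst split, rule sum.union_disjoint) (use fin in auto)
  also have "(\<Sum>N\<in>?A. 2^(3*n - size N)) = (\<Sum>M\<in>ternary_partitions (3*(n-1)). (2::int)^(3*n - size (M + replicate_mset 3 1)))"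
  proof -
    have e: "3*(n-1) + 3 = 3*n" using assms by simp
    show ?thesis
      using sum.reindex_bij_betw[OF bij_ones[of 3 "3*(n-1)"], of "\<lambda>N. (2::int)^(3*n - size N)"]
      unfolding e by simp
  qed
  also have "\<dots> = f (3*(n-1))" unfolding f_def using assms
    by (intro sum.cong) (auto simp: algebra_simps)
  also have "(\<Sum>N\<in>?B. 2^(3*n - size N)) = (\<Sum>M\<in>ternary_partitions n. (2::int)^(3*n - size (image_mset ((*) 3) M)))"
    using sum.reindex_bij_betw[OF bij_triple[of n], of "\<lambda>N. (2::int)^(3*n - size N)"] by simp
  also have "\<dots> = (\<Sum>M\<in>ternary_partitions n. 2^(2*n) * 2^(n - size M))"
  proof (rule sum.cong)
    fix M assume "M \<in> ternary_partitions n"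
    then have "size M \<le> n" by (rule T_size_le)
    then have "3*n - size (image_mset ((*) 3) M) = 2*n + (n - size M)" by simp
    then show "(2::int)^(3*n - size (image_mset ((*) 3) M)) = 2^(2*n) * 2^(n - size M)"
      by (simp add: power_add)
  qed simp
  also have "\<dots> = 2^(2*n) * f n" unfolding f_def by (simp add: sum_distrib_left)
  finally show ?thesis .
qed



lemma mp_add: "map_poly (of_int :: int \<Rightarrow> real) (p + q) = map_poly of_int p + map_poly of_int q"
  by (rule poly_eqI) (simp add: coeff_map_poly)

lemma mp_mult: "map_poly (of_int :: int \<Rightarrow> real) (p * q) = map_poly of_int p * map_poly of_int q"
proof (induction p)
  case 0 then show ?case by simp
next
  case (pCons a p)
  have "map_poly (of_int :: int \<Rightarrow> real) (pCons a p * q)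
      = map_poly of_int (smult a q) + map_poly of_int (pCons 0 (p * q))"
    by (simp only: mult_pCons_left mp_add)
  also have "\<dots> = smult (of_int a) (map_poly of_int q) + pCons 0 (map_poly of_int p * map_poly of_int q)"
    by (simp add: map_poly_smult map_poly_pCons pCons.IH)
  also have "\<dots> = pCons (of_int a) (map_poly of_int p) * map_poly of_int q"
    by (simp only: mult_pCons_left)
  also have "\<dots> = map_poly of_int (pCons a p) * map_poly of_int q"
    by (simp add: map_poly_pCons)
  finally show ?case .
qed

lemma mp_power: "map_poly (of_int :: int \<Rightarrow> real) (p ^ k) = map_poly of_int p ^ k"
  by (induction k) (simp_all add: mp_mult)

lemma mp_prod: "map_poly (of_int :: int \<Rightarrow> real) (\<Prod>i\<in>A. (g i :: int poly)) = (\<Prod>i\<in>A. map_poly of_int (g i))"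
  by (induction A rule: infinite_finite_induct) (simp_all add: mp_mult)

lemma poly_mp_int: "poly (map_poly (of_int :: int \<Rightarrow> real) p) (of_int x) = of_int (poly p x)"
  by (induction p) (simp_all add: map_poly_pCons)

lemma pos_at_1:
  fixes G W h :: "int poly"
  assumes hGW: "h = G * W" and lc: "lead_coeff G > 0"
    and nz: "\<forall>x::real. x \<ge> 1 \<longrightarrow> poly (map_poly of_int h) x \<noteq> 0"
  shows "poly G 1 > 0"
proof (rule ccontr)
  assume neg: "\<not> poly G 1 > 0"
  define Gr where "Gr = map_poly (of_int :: int \<Rightarrow> real) G"
  define Wr where "Wr = map_poly (of_int :: int \<Rightarrow> real) W"
  have hr: "map_poly of_int h = Gr * Wr" unfolding Gr_def Wr_def hGW by (rule mp_mult)
  have "poly Gr 1 = of_int (poly G 1)" unfolding Gr_def using poly_mp_int[of G 1] by simp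
  moreover have "poly Gr 1 \<noteq> 0" using nz hr by auto
  ultimately have g1: "poly Gr 1 < 0" using neg by simp
  have lcr: "lead_coeff Gr = of_int (lead_coeff G)" unfolding Gr_def
    by (rule lead_coeff_map_poly_nz) (use lc in auto)
  then have "lead_coeff Gr > 0" using lc by simp
  from poly_pinfty_gt_lc[OF this] obtain n0 where n0: "\<forall>x\<ge>n0. lead_coeff Gr \<le> poly Gr x" by blast
  define b where "b = max n0 2"
  have "poly Gr b \<ge> lead_coeff Gr" using n0 unfolding b_def by simp
  then have "poly Gr b > 0" using \<open>lead_coeff Gr > 0\<close> by linarith
  have "1 < b" unfolding b_def by simp
  from poly_IVT_pos[OF this g1 \<open>poly Gr b > 0\<close>] obtain x where x: "1 < x" "x < b" "poly Gr x = 0"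
    by blast
  then have "poly (map_poly of_int h) x = 0" using hr by simp
  with nz x show False by auto
qed

definition Apol :: "nat \<Rightarrow> int poly" where "Apol N = [:1:] + monom 1 N"
definition Ppol :: "nat \<Rightarrow> int poly" where "Ppol N = Apol N div [:1,1:]"

lemma Apol_factor: assumes "odd N" shows "Apol N = [:1,1:] * Ppol N" "poly (Ppol N) 1 = 1"
proof -
  have "poly (Apol N) (-1) = 0" using assms by (simp add: Apol_def poly_monom)
  then have "[:- (-1), 1:] dvd Apol N" using poly_eq_0_iff_dvd by blast
  then have d: "[:1, 1:] dvd Apol N" by simp
  then show e: "Apol N = [:1,1:] * Ppol N" unfolding Ppol_def by (rule dvd_mult_div_cancel[symmetric])
  have "poly (Apol N) 1 = 2" by (simp add: Apol_def poly_monom)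
  then have "2 * poly (Ppol N) 1 = 2" using arg_cong[OF e, of "\<lambda>p. poly p 1"] by simp
  then show "poly (Ppol N) 1 = 1" by simp
qed

lemma h_T_alt: "h_T n M = (\<Prod>k\<in>{0..n}. Apol (3^k) ^ (n div 3 ^ k - count M (3 ^ k)))"
  unfolding h_T_def Apol_def ..

definition Rpol :: "nat \<Rightarrow> nat multiset \<Rightarrow> int poly" where
  "Rpol n M = (\<Prod>k\<in>{0..n}. Ppol (3^k) ^ (n div 3 ^ k - count M (3 ^ k)))"

lemma odd_pow3: "odd ((3::nat)^k)" by simp

lemma h_factor: "h_T n M = [:1,1:] ^ (\<Sum>k\<in>{0..n}. n div 3 ^ k - count M (3 ^ k)) * Rpol n M"
proof -
  have "h_T n M = (\<Prod>k\<in>{0..n}. ([:1,1:] * Ppol (3^k)) ^ (n div 3 ^ k - count M (3 ^ k)))"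
    unfolding h_T_alt by (intro prod.cong refl) (simp only: Apol_factor(1)[OF odd_pow3])
  also have "\<dots> = (\<Prod>k\<in>{0..n}. [:1,1:] ^ (n div 3 ^ k - count M (3 ^ k)) * Ppol (3^k) ^ (n div 3 ^ k - count M (3 ^ k)))"
    by (simp only: power_mult_distrib)
  also have "\<dots> = (\<Prod>k\<in>{0..n}. [:1,1:] ^ (n div 3 ^ k - count M (3 ^ k))) * Rpol n M"
    unfolding Rpol_def by (rule prod.distrib)
  also have "\<dots> = [:1,1:] ^ (\<Sum>k\<in>{0..n}. n div 3 ^ k - count M (3 ^ k)) * Rpol n M"
    by (simp only: power_sum)
  finally show ?thesis .
qed

lemma poly_Rpol: "poly (Rpol n M) 1 = 1"
  unfolding Rpol_def poly_prod poly_power by (simp add: Apol_factor(2)[OF odd_pow3])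

lemma count_mul_le: "count M x * x \<le> sum_mset (M::nat multiset)"
proof -
  have "M = filter_mset (\<lambda>y. y = x) M + filter_mset (\<lambda>y. \<not> y = x) M"
    by (rule multiset_partition)
  then have "sum_mset M = sum_mset (filter_mset (\<lambda>y. y = x) M) + sum_mset (filter_mset (\<lambda>y. \<not> y = x) M)"
    by (metis sum_mset.union)
  moreover have "sum_mset (filter_mset (\<lambda>y. y = x) M) = count M x * x"
    by (simp only: filter_eq_replicate_mset sum_mset_replicate_mset of_nat_id)
  ultimately show ?thesis by linarith
qed

lemma count_le_div: assumes "M \<in> ternary_partitions n" shows "count M (3^k) \<le> n div 3^k"
proof -
  have "count M (3^k) * 3^k \<le> n" using count_mul_le[of M "3^k"] assms
    unfolding ternary_partitions_def by simp
  then show ?thesis by (simp add: less_eq_div_iff_mult_less_eq)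
qed

lemma size_as_sum: assumes "M \<in> ternary_partitions n"
  shows "(\<Sum>k\<in>{0..n}. count M (3^k)) = size M"
proof -
  have inj: "inj_on (\<lambda>k. (3::nat)^k) {0..n}" by (rule inj_onI) simp
  have sub: "set_mset M \<subseteq> (\<lambda>k. 3^k) ` {0..n}"
  proof
    fix x assume x: "x \<in> set_mset M"
    then obtain k where k: "x = 3^k" using assms unfolding ternary_partitions_def by blast
    have "x \<le> n" using T_elem_le[OF assms] x by simp
    moreover have "k < 3^k" by (induction k) auto
    ultimately have "k \<in> {0..n}" using k by simp
    then show "x \<in> (\<lambda>k. 3^k) ` {0..n}" using k by blast
  qed
  have "(\<Sum>k\<in>{0..n}. count M (3^k)) = sum (count M) ((\<lambda>k. 3^k) ` {0..n})"
    using sum.reindex[OF inj, of "count M"] by (simp add: o_def)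
  also have "\<dots> = sum (count M) (set_mset M)"
    by (rule sum.mono_neutral_right) (use sub in \<open>auto simp: count_eq_zero_iff\<close>)
  also have "\<dots> = size M" by (simp only: size_multiset_overloaded_eq)
  finally show ?thesis .
qed

definition Cn :: "nat \<Rightarrow> nat" where "Cn n = (\<Sum>k\<in>{0..n}. n div 3 ^ k)"

lemma exp_sum: assumes "M \<in> ternary_partitions n"
  shows "(\<Sum>k\<in>{0..n}. n div 3 ^ k - count M (3 ^ k)) = Cn n - size M"
  unfolding Cn_def using sum_subtractf_nat[of "{0..n}" "\<lambda>k. count M (3^k)" "\<lambda>k. n div 3^k"]
    count_le_div[OF assms] size_as_sum[OF assms] by simp

lemma n_le_Cn: "n \<le> Cn n"
proof -
  have "n div 3^0 \<le> Cn n" unfolding Cn_def by (rule member_le_sum) auto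
  then show ?thesis by simp
qed

lemma h_factor2: assumes "M \<in> ternary_partitions n"
  shows "h_T n M = [:1,1:] ^ (Cn n - size M) * Rpol n M"
  using h_factor[of n M] exp_sum[OF assms] by simp

lemma poly_h: assumes "M \<in> ternary_partitions n"
  shows "poly (h_T n M) 1 = 2 ^ (Cn n - size M)"
  unfolding h_factor2[OF assms] poly_mult poly_power poly_Rpol by simp

lemma ones_T: "replicate_mset n 1 \<in> ternary_partitions n"
proof -
  have "\<forall>x\<in>#replicate_mset n (1::nat). \<exists>k. x = 3^k"
  proof
    fix x assume "x \<in># replicate_mset n (1::nat)"
    then have "x = 3^0" by (simp split: if_splits)
    then show "\<exists>k. x = (3::nat)^k" by blast
  qed
  moreover have "sum_mset (replicate_mset n (1::nat)) = n" by simp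
  ultimately show ?thesis unfolding ternary_partitions_def by blast
qed

lemma map_Apol: "map_poly (of_int :: int \<Rightarrow> real) (Apol N) = [:1:] + monom 1 N"
  unfolding Apol_def mp_add by (simp add: map_poly_monom map_poly_pCons)

lemma h_real_pos: assumes "x \<ge> (1::real)"
  shows "poly (map_poly of_int (h_T n M)) x > 0"
proof -
  have "poly (map_poly of_int (h_T n M)) x = (\<Prod>k\<in>{0..n}. (1 + x ^ (3^k)) ^ (n div 3 ^ k - count M (3 ^ k)))"
    unfolding h_T_alt mp_prod mp_power map_Apol poly_prod poly_power by (simp add: poly_monom)
  also have "\<dots> > 0" by (intro prod_pos zero_less_power) (use assms in \<open>auto intro!: add_pos_pos\<close>)
  finally show ?thesis .
qed

lemma main_poly: "poly (num_T n) 1 = f n"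
proof -
  let ?T = "ternary_partitions n"
  let ?X = "[:1,1:] :: int poly"
  let ?D = "?X ^ (Cn n - n)"
  let ?O = "replicate_mset n (1::nat)"
  define G where "G = G_T n"
  have G_def': "G = Gcd (h_T n ` ?T)" unfolding G_def G_T_def ..
  have DG: "?D dvd G" unfolding G_def'
  proof (rule Gcd_greatest)
    fix b assume "b \<in> h_T n ` ?T"
    then obtain M where M: "M \<in> ?T" "b = h_T n M" by blast
    have "size M \<le> n" using T_size_le[OF M(1)] .
    then have "Cn n - n \<le> Cn n - size M" by simp
    then have "?D dvd ?X ^ (Cn n - size M)" by (rule le_imp_power_dvd)
    then show "?D dvd b" unfolding M(2) h_factor2[OF M(1)] by (rule dvd_mult2)
  qed
  have GO: "G dvd h_T n ?O" unfolding G_def' by (rule Gcd_dvd) (use ones_T in blast)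
  have hO: "h_T n ?O = ?D * Rpol n ?O" using h_factor2[OF ones_T, of n] by simp
  obtain Q where Q: "G = ?D * Q" using DG by (auto elim: dvdE)
  have "?D * Q dvd ?D * Rpol n ?O" using GO unfolding Q hO .
  then have "Q dvd Rpol n ?O" by (subst (asm) dvd_times_left_cancel_iff) auto
  then obtain W where W: "Rpol n ?O = Q * W" by (auto elim: dvdE)
  have "poly Q 1 * poly W 1 = 1" using arg_cong[OF W, of "\<lambda>p. poly p 1"] poly_Rpol by simp
  then have "is_unit (poly Q 1)" by (metis dvdI)
  then have Q1: "\<bar>poly Q 1\<bar> = 1" by (simp add: zdvd1_eq)
  have G1: "poly G 1 = 2 ^ (Cn n - n) * poly Q 1" unfolding Q by simp
  obtain W' where W': "h_T n ?O = G * W'" using GO by (auto elim: dvdE)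
  have "poly (h_T n ?O) 1 \<noteq> 0" using poly_h[OF ones_T, of n] by simp
  then have "G \<noteq> 0" using W' by auto
  have "normalize G = G" unfolding G_def' by (rule normalize_Gcd)
  then have "unit_factor G = 1" using unit_factor_normalize[OF \<open>G \<noteq> 0\<close>] by simp
  then have "[:unit_factor (lead_coeff G):] = 1" by (simp add: unit_factor_poly_def)
  then have "sgn (lead_coeff G) = 1" by (simp add: one_pCons)
  then have lcG: "lead_coeff G > 0" by (simp add: sgn_1_pos)
  have "poly G 1 > 0"
  proof (rule pos_at_1[OF W' lcG], intro allI impI)
    fix x :: real assume "x \<ge> 1"
    from h_real_pos[OF this, of n ?O] show "poly (map_poly of_int (h_T n ?O)) x \<noteq> 0" by simp
  qed
  then have "poly Q 1 = 1" using G1 Q1 by (auto simp: zero_less_mult_iff abs_if split: if_splits)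
  then have G1': "poly G 1 = 2 ^ (Cn n - n)" using G1 by simp
  define S where "S = (\<Sum>M\<in>?T. h_T n M)"
  have GS: "G dvd S" unfolding S_def G_def'
    by (rule dvd_sum) (rule Gcd_dvd, blast)
  have num: "num_T n = S div G" unfolding num_T_def S_def G_def ..
  have "S = G * num_T n" unfolding num using GS by simp
  then have "poly S 1 = poly G 1 * poly (num_T n) 1" by simp
  moreover have "poly S 1 = (\<Sum>M\<in>?T. 2 ^ (Cn n - n) * 2 ^ (n - size M))"
  proof -
    have "poly S 1 = (\<Sum>M\<in>?T. poly (h_T n M) 1)" unfolding S_def by (simp add: poly_sum)
    also have "\<dots> = (\<Sum>M\<in>?T. 2 ^ (Cn n - n) * 2 ^ (n - size M))"
    proof (rule sum.cong[OF refl])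
      fix M assume M: "M \<in> ?T"
      have "size M \<le> n" using T_size_le[OF M] .
      then have "Cn n - size M = (Cn n - n) + (n - size M)" using n_le_Cn[of n] by simp
      then show "poly (h_T n M) 1 = 2 ^ (Cn n - n) * 2 ^ (n - size M)"
        unfolding poly_h[OF M] by (simp only: power_add)
    qed
    finally show ?thesis .
  qed
  ultimately have "2 ^ (Cn n - n) * poly (num_T n) 1 = 2 ^ (Cn n - n) * f n"
    unfolding G1' f_def by (simp add: sum_distrib_left)
  then show ?thesis by simp
qed

theorem theorem5:
  shows "(\<forall>n::nat. t_seq (3*n) = t_seq (3*n+1) \<and> t_seq (3*n+1) = t_seq (3*n+2))
       \<and> (\<forall>n::nat. n \<ge> 1 \<longrightarrow> t_seq (3*n) - t_seq (3*n-2) = 2^(2*n) * t_seq n)"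
proof -
  have tf: "t_seq m = f m" for m
  proof (cases "m = 0")
    case True
    have "ternary_partitions 0 = {{#}}"
    proof
      show "ternary_partitions 0 \<subseteq> {{#}}" using T_size_le[of _ 0] by auto
      show "{{#}} \<subseteq> ternary_partitions 0" unfolding ternary_partitions_def by simp
    qed
    then have "f 0 = 1" unfolding f_def by simp
    then show ?thesis using True unfolding t_seq_def by simp
  next
    case False
    then show ?thesis unfolding t_seq_def using main_poly by simp
  qed
  have A: "t_seq (3*n) = t_seq (3*n+1) \<and> t_seq (3*n+1) = t_seq (3*n+2)" for n
    unfolding tf using f_shift[of 1 n] f_shift[of 2 n] by simp
  have B: "t_seq (3*n) - t_seq (3*n-2) = 2^(2*n) * t_seq n" if "n \<ge> 1" for n
  proof -
    have "3*n-2 = 3*(n-1) + 1" using that by simp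
    then have "f (3*n-2) = f (3*(n-1))" using f_shift[of 1 "n-1"] by simp
    then show ?thesis unfolding tf using f_rec[OF that] by simp
  qed
  show ?thesis using A B by blast
qed
end
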